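(* Let $u=0$, $\theta=1$ and $m\in\mathbb N$. If $y_1<y_2<0$, then $D_{y_1}\subseteq D_{y_2}$.
   Context: With $u=0$, $\theta=1$ and $m\in\mathbb N$ fixed, for $y<0$ let $D_y$ be the set of $\mu\in\mathbb C$ such that every root $\xi$ of the polynomial equation $\xi^{m+1}-\xi^m=y\,\xi^{m+1}-y\mu\,\xi$ satisfies $|\xi|<1$. *)

theory Defs
  imports Complex_Main
begin

definition D :: "nat \<Rightarrow> real \<Rightarrow> complex set" where
  "D m y = {\<mu>. \<forall>\<xi>::complex.
      \<xi> ^ (m + 1) - \<xi> ^ m = complex_of_real y * \<xi> ^ (m + 1) - complex_of_real y * \<mu> * \<xi>
      \<longrightarrow> cmod \<xi> < 1}"

end

theory Submission imports Defs "HOL-Analysis.Analysis" begin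

definition P :: "nat \<Rightarrow> real \<Rightarrow> complex \<Rightarrow> complex \<Rightarrow> complex" where
  "P m y \<mu> \<xi> = (1 - of_real y) * \<xi>^m - \<xi>^(m-1) + of_real y * \<mu>"

lemma eq_iff_P:
  assumes "m \<ge> 1" "\<xi> \<noteq> 0"
  shows "(\<xi> ^ (m + 1) - \<xi> ^ m = complex_of_real y * \<xi> ^ (m + 1) - complex_of_real y * \<mu> * \<xi>)
     \<longleftrightarrow> P m y \<mu> \<xi> = 0"
proof -
  obtain k where k: "m = Suc k" using assms(1) by (cases m) auto
  have "(\<xi> ^ (m + 1) - \<xi> ^ m = complex_of_real y * \<xi> ^ (m + 1) - complex_of_real y * \<mu> * \<xi>)
     \<longleftrightarrow> \<xi> * P m y \<mu> \<xi> = 0"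
    unfolding P_def k by (simp add: algebra_simps)
  then show ?thesis using assms(2) by simp
qed

lemma cmod_add_sq: "(cmod (a + b))^2 = (cmod a)^2 + 2 * Re (cnj a * b) + (cmod b)^2"
  unfolding cmod_power2 by (simp add: power2_eq_square algebra_simps)

lemma root_bound:
  assumes "m \<ge> 1" "y < 0" "cmod \<zeta> \<ge> 1" "P m y \<mu> \<zeta> = 0"
  shows "cmod \<zeta> \<le> 1 + \<bar>y\<bar> * cmod \<mu>"
proof -
  obtain k where k: "m = Suc k" using assms(1) by (cases m) auto
  have e: "(1 - of_real y) * \<zeta> * \<zeta>^k = \<zeta>^k - of_real y * \<mu>"
    using assms(4) unfolding P_def k by (simp add: algebra_simps)
  have "(1 - y) * cmod \<zeta> * cmod \<zeta> ^ k = cmod ((1 - of_real y) * \<zeta> * \<zeta>^k)"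
  proof -
    have "cmod (1 - of_real y) = 1 - y"
      by (metis assms(2) abs_of_pos diff_gt_0_iff_gt dual_order.strict_trans norm_of_real of_real_1 of_real_diff zero_less_one)
    then show ?thesis by (simp add: norm_mult norm_power)
  qed
  also have "\<dots> \<le> cmod \<zeta> ^ k + \<bar>y\<bar> * cmod \<mu>"
    unfolding e by (metis norm_triangle_ineq4 norm_mult norm_of_real norm_power)
  also have "\<dots> \<le> cmod \<zeta> ^ k * (1 + \<bar>y\<bar> * cmod \<mu>)"
  proof -
    have "1 \<le> cmod \<zeta> ^ k" using assms(3) by (simp add: one_le_power)
    then show ?thesis by (simp add: algebra_simps) (metis mult_right_mono mult_1 abs_ge_zero norm_ge_zero mult_nonneg_nonneg mult.commute)
  qed
  finally have "(1 - y) * cmod \<zeta> * cmod \<zeta> ^ k \<le> cmod \<zeta> ^ k * (1 + \<bar>y\<bar> * cmod \<mu>)" .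
  moreover have "cmod \<zeta> ^ k > 0" using assms(3) by (intro zero_less_power) linarith
  ultimately have "(1 - y) * cmod \<zeta> \<le> 1 + \<bar>y\<bar> * cmod \<mu>"
    by (simp add: mult.commute)
  moreover have "cmod \<zeta> \<le> (1 - y) * cmod \<zeta>" using assms(2) by (simp add: mult_le_cancel_right1)
  ultimately show ?thesis by linarith
qed

lemma sign_real:
  fixes A B u v :: real
  assumes "0 \<le> B" "B < A" "1 \<le> u^2 + v^2" "\<not> (u = 1 \<and> v = 0)"
  shows "(1 - u) * (A * u - B) - A * v^2 < 0"
proof -
  define r where "r = sqrt (u^2 + v^2)"
  have r1: "1 \<le> r" unfolding r_def using assms(3) by simp
  have rsq: "r^2 = u^2 + v^2" unfolding r_def by simp
  have ur: "u \<le> r"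
  proof -
    have "sqrt (u^2) \<le> r" unfolding r_def by (intro real_sqrt_le_mono) simp
    then show ?thesis by simp
  qed
  have e: "(1 - u) * (A * u - B) - A * v^2 = (A + B) * u - A * r^2 - B" using rsq by (simp add: algebra_simps power2_eq_square)
  show ?thesis
  proof (cases "r = 1")
    case True
    have "u \<noteq> 1"
    proof
      assume "u = 1"
      with rsq True have "v^2 = 0" by simp
      then show False using assms(4) \<open>u = 1\<close> by simp
    qed
    then have "u < 1" using ur True by simp
    have "(A + B) * u - A * r^2 - B = (A + B) * (u - 1)" using True by (simp add: algebra_simps)
    moreover have "(A + B) * (u - 1) < 0" using \<open>u < 1\<close> assms(1,2) by (intro mult_pos_neg) auto
    ultimately show ?thesis unfolding e by linarith
  next
    case False
    then have "r > 1" using r1 by simp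
    have "(A + B) * u \<le> (A + B) * r" using ur assms(1,2) by (simp add: mult_left_mono)
    moreover have "(A + B) * r - A * r^2 - B = - ((r - 1) * (A * r - B))" by (simp add: algebra_simps power2_eq_square)
    moreover have "(r - 1) * (A * r - B) > 0"
    proof -
      have "A * r \<ge> A" using r1 assms by (simp add: mult_le_cancel_left1)
      then have "A * r - B > 0" using assms by linarith
      then show ?thesis using \<open>r > 1\<close> by (intro mult_pos_pos) auto
    qed
    ultimately show ?thesis unfolding e by linarith
  qed
qed

lemma Re_ofreal_mult: "Re (of_real a * z) = a * Re z"
  by simp

lemma local_step:
  assumes m1: "m \<ge> 1" and y0: "y < 0" and n1: "cmod \<xi> \<ge> 1" and r0: "P m y \<mu> \<xi> = 0" and ne1: "\<xi> \<noteq> 1"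
  shows "\<exists>\<delta>>0. \<forall>\<epsilon>. 0 < \<epsilon> \<longrightarrow> \<epsilon> < \<delta> \<longrightarrow> (\<exists>\<zeta>. cmod \<zeta> \<ge> 1 \<and> P m (y - \<epsilon>) \<mu> \<zeta> = 0)"
proof -
  obtain k where k: "m = Suc k" using m1 by (cases m) auto
  have xi0: "\<xi> \<noteq> 0" using n1 by auto
  define c where "c = (1 - of_real y) * (of_nat m * \<xi>^(m-1)) - of_nat (m-1) * \<xi>^(m-1-1)"
  have der: "(P m y \<mu> has_field_derivative c) (at \<xi>)"
    unfolding P_def c_def by (auto intro!: derivative_eq_intros)
  define A where "A = real m * (1 - y)"
  define B where "B = real m - 1"
  define d where "d = of_real A * \<xi> - of_real B"
  have cxi: "c * \<xi> = \<xi>^(m-1) * d"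
  proof (cases k)
    case 0
    then show ?thesis unfolding c_def d_def A_def B_def k by simp
  next
    case (Suc j)
    have "\<xi>^(m-1-1) * \<xi> = \<xi>^(m-1)" unfolding k Suc by simp
    then show ?thesis unfolding c_def d_def A_def B_def k
      by (simp add: algebra_simps)
  qed
  have B0: "0 \<le> B" unfolding B_def using m1 by simp
  have BA: "B < A" unfolding A_def B_def using m1 y0
    by (smt (verit, ccfv_SIG) mult_le_cancel_left1 of_nat_0_le_iff)
  have d0: "d \<noteq> 0"
  proof
    assume "d = 0"
    then have "of_real A * \<xi> = of_real B" unfolding d_def by simp
    then have "A * cmod \<xi> = B" using BA B0
      by (metis abs_of_nonneg less_eq_real_def norm_mult norm_of_real order.trans)
    moreover have "A \<le> A * cmod \<xi>" using n1 BA B0 by (simp add: mult_le_cancel_left1)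
    ultimately show False using BA by simp
  qed
  have c0: "c \<noteq> 0" using cxi d0 xi0 by auto
  have hmu: "of_real y * (\<mu> - \<xi>^m) = \<xi>^(m-1) * (1 - \<xi>)"
    using r0 unfolding P_def k by (simp add: algebra_simps)
  define w where "w = (\<mu> - \<xi>^m) / c"
  have cw: "c * w = \<mu> - \<xi>^m" unfolding w_def using c0 by simp
  have cnjw: "cnj \<xi> * w = of_real ((cmod \<xi>)^2 / y) * ((1 - \<xi>) / d)"
  proof -
    have "cnj \<xi> * w = (cnj \<xi> * \<xi>) * (\<mu> - \<xi>^m) / (c * \<xi>)" unfolding w_def using xi0 c0 by (simp add: field_simps)
    also have "\<dots> = of_real ((cmod \<xi>)^2) * (\<xi>^(m-1) * (1 - \<xi>) / of_real y) / (\<xi>^(m-1) * d)"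
    proof -
      have e1: "cnj \<xi> * \<xi> = of_real ((cmod \<xi>)^2)" by (metis complex_norm_square mult.commute)
      have e2: "\<mu> - \<xi>^m = \<xi>^(m-1) * (1 - \<xi>) / of_real y"
        using hmu y0 by (simp add: field_simps)
      show ?thesis by (simp only: e1 e2 cxi)
    qed
    also have "\<dots> = of_real ((cmod \<xi>)^2 / y) * ((1 - \<xi>) / d)" using xi0 d0 y0 by (simp add: field_simps)
    finally show ?thesis .
  qed
  define \<kappa> where "\<kappa> = Re (cnj \<xi> * w)"
  have kpos: "\<kappa> > 0"
  proof -
    have "Re ((1 - \<xi>) / d) = ((1 - Re \<xi>) * (A * Re \<xi> - B) - A * (Im \<xi>)^2) / (cmod d)^2"
      unfolding Re_divide' d_def by (simp add: algebra_simps power2_eq_square)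
    moreover have "(1 - Re \<xi>) * (A * Re \<xi> - B) - A * (Im \<xi>)^2 < 0"
    proof (rule sign_real[OF B0 BA])
      show "1 \<le> (Re \<xi>)^2 + (Im \<xi>)^2" using n1 by (simp add: cmod_power2[symmetric] one_le_power)
      show "\<not> (Re \<xi> = 1 \<and> Im \<xi> = 0)" using ne1 complex_eq_iff by auto
    qed
    moreover have "(cmod d)^2 > 0" using d0 by simp
    ultimately have "Re ((1 - \<xi>) / d) < 0" by (simp add: divide_neg_pos)
    moreover have "(cmod \<xi>)^2 / y < 0" using y0 xi0 by (simp add: divide_pos_neg)
    moreover have "\<kappa> = ((cmod \<xi>)^2 / y) * Re ((1 - \<xi>) / d)"
      unfolding \<kappa>_def cnjw by (rule Re_ofreal_mult)
    ultimately show ?thesis by (metis mult_neg_neg)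
  qed
  define L where "L = cmod w + \<kappa>"
  have Lpos: "L > 0" unfolding L_def using kpos by (simp add: add_nonneg_pos)
  define \<eta> where "\<eta> = cmod c * \<kappa> / (4 * L)"
  define \<gamma> where "\<gamma> = cmod c * \<kappa> / 4"
  have etapos: "\<eta> > 0" unfolding \<eta>_def using c0 kpos Lpos by simp
  have gpos: "\<gamma> > 0" unfolding \<gamma>_def using c0 kpos by simp
  have "((\<lambda>z. (P m y \<mu> z - P m y \<mu> \<xi>) / (z - \<xi>)) \<longlongrightarrow> c) (at \<xi>)"
    using der by (simp add: has_field_derivative_iff)
  then have "\<forall>\<^sub>F z in at \<xi>. dist ((P m y \<mu> z - P m y \<mu> \<xi>) / (z - \<xi>)) c < \<eta>"
    using etapos tendstoD by blast
  then obtain r where r: "r > 0"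
    and hr: "\<And>z. z \<noteq> \<xi> \<Longrightarrow> dist z \<xi> < r \<Longrightarrow> dist ((P m y \<mu> z - P m y \<mu> \<xi>) / (z - \<xi>)) c < \<eta>"
    unfolding eventually_at by blast
  have "isCont (\<lambda>z. z^m) \<xi>" by simp
  then obtain r2 where r2: "r2 > 0" and hr2: "\<And>z. dist z \<xi> < r2 \<Longrightarrow> dist (z^m) (\<xi>^m) < \<gamma>"
  proof -
    from \<open>isCont (\<lambda>z. z^m) \<xi>\<close> gpos obtain d where d: "d > 0"
      and hd: "\<And>x. x \<noteq> \<xi> \<Longrightarrow> dist x \<xi> < d \<Longrightarrow> dist (x ^ m) (\<xi> ^ m) < \<gamma>"
      unfolding isCont_def tendsto_iff eventually_at by blast
    have "dist z \<xi> < d \<Longrightarrow> dist (z^m) (\<xi>^m) < \<gamma>" for z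
      using hd[of z] gpos by (cases "z = \<xi>") auto
    then show ?thesis using that d by blast
  qed
  have Rbound: "cmod (P m y \<mu> z - c * (z - \<xi>)) \<le> \<eta> * cmod (z - \<xi>)" if "dist z \<xi> < r" for z
  proof (cases "z = \<xi>")
    case True then show ?thesis using r0 by simp
  next
    case False
    have "P m y \<mu> z - c * (z - \<xi>) = ((P m y \<mu> z - P m y \<mu> \<xi>) / (z - \<xi>) - c) * (z - \<xi>)"
      using False r0 by (simp add: field_simps)
    also have "cmod \<dots> \<le> \<eta> * cmod (z - \<xi>)"
      using hr[OF False that] by (simp add: norm_mult dist_norm mult_right_mono)
    finally show ?thesis .
  qed
  define \<delta> where "\<delta> = min (min r r2 / L) (2 / \<kappa>)"
  have dpos: "\<delta> > 0" unfolding \<delta>_def using r r2 Lpos kpos by simp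
  show ?thesis
  proof (intro exI[of _ \<delta>] conjI allI impI dpos)
    fix \<epsilon> :: real assume e0: "0 < \<epsilon>" and ed: "\<epsilon> < \<delta>"
    define \<xi>0 where "\<xi>0 = \<xi> + of_real \<epsilon> * w"
    define \<rho> where "\<rho> = \<epsilon> * \<kappa> / 2"
    have rho0: "\<rho> > 0" unfolding \<rho>_def using e0 kpos by simp
    define T where "T = (\<lambda>z. z - P m (y - \<epsilon>) \<mu> z / c)"
    have Pshift: "P m (y - \<epsilon>) \<mu> z = P m y \<mu> z + of_real \<epsilon> * (z^m - \<mu>)" for z
      unfolding P_def by (simp add: algebra_simps)
    have eL: "\<epsilon> * L \<le> min r r2" using ed Lpos unfolding \<delta>_def by (simp add: pos_less_divide_eq less_imp_le)
    have ek: "\<epsilon> * \<kappa> \<le> 2" using ed kpos unfolding \<delta>_def by (simp add: pos_less_divide_eq less_imp_le mult.commute)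
    have Tin: "T z \<in> cball \<xi>0 \<rho>" if z: "z \<in> cball \<xi>0 \<rho>" for z
    proof -
      have "cmod (z - \<xi>) \<le> cmod (z - \<xi>0) + cmod (\<xi>0 - \<xi>)" using norm_triangle_ineq[of "z - \<xi>0" "\<xi>0 - \<xi>"] by simp
      also have "\<dots> \<le> \<rho> + \<epsilon> * cmod w" using z e0 unfolding \<xi>0_def by (simp add: dist_norm norm_minus_commute norm_mult)
      finally have zx: "cmod (z - \<xi>) \<le> \<rho> + \<epsilon> * cmod w" .
      have "\<rho> + \<epsilon> * cmod w < \<epsilon> * L" unfolding \<rho>_def L_def using e0 kpos by (simp add: algebra_simps)
      with zx eL have zr: "dist z \<xi> < r" "dist z \<xi> < r2" by (auto simp: dist_norm)
      have key: "P m (y - \<epsilon>) \<mu> z = c * (z - \<xi>0) + (P m y \<mu> z - c * (z - \<xi>)) + of_real \<epsilon> * (z^m - \<xi>^m)"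
      proof -
        have "of_real \<epsilon> * (z^m - \<mu>) = of_real \<epsilon> * (z^m - \<xi>^m) - of_real \<epsilon> * (c * w)"
          unfolding cw by (simp add: algebra_simps)
        then show ?thesis unfolding Pshift \<xi>0_def by (simp add: algebra_simps)
      qed
      have "T z - \<xi>0 = - (((P m y \<mu> z - c * (z - \<xi>)) + of_real \<epsilon> * (z^m - \<xi>^m)) / c)"
        unfolding T_def key using c0 by (simp add: field_simps)
      then have "cmod (T z - \<xi>0) = cmod ((P m y \<mu> z - c * (z - \<xi>)) + of_real \<epsilon> * (z^m - \<xi>^m)) / cmod c"
        by (simp only: norm_minus_cancel norm_divide)
      also have "\<dots> \<le> (\<eta> * cmod (z - \<xi>) + \<epsilon> * \<gamma>) / cmod c"
      proof (intro divide_right_mono order.trans[OF norm_triangle_ineq] add_mono)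
        show "cmod (P m y \<mu> z - c * (z - \<xi>)) \<le> \<eta> * cmod (z - \<xi>)" using Rbound zr by blast
        show "cmod (of_real \<epsilon> * (z ^ m - \<xi> ^ m)) \<le> \<epsilon> * \<gamma>"
          using hr2[OF zr(2)] e0 by (simp add: norm_mult dist_norm less_imp_le)
      qed simp
      also have "\<dots> \<le> (\<eta> * (\<epsilon> * L) + \<epsilon> * \<gamma>) / cmod c"
        using zx \<open>\<rho> + \<epsilon> * cmod w < \<epsilon> * L\<close> etapos e0 gpos by (intro divide_right_mono add_mono mult_left_mono) auto
      also have "\<dots> = \<rho>" unfolding \<eta>_def \<gamma>_def \<rho>_def using c0 Lpos by (simp add: field_simps)
      finally show ?thesis by (simp add: dist_norm norm_minus_commute)
    qed
    have contT: "continuous_on (cball \<xi>0 \<rho>) T" unfolding T_def P_def by (intro continuous_intros) (use c0 in auto)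
    obtain \<zeta> where z: "\<zeta> \<in> cball \<xi>0 \<rho>" and fz: "T \<zeta> = \<zeta>"
      using brouwer_ball[OF rho0 contT] Tin by blast
    have "P m (y - \<epsilon>) \<mu> \<zeta> = 0" using fz c0 unfolding T_def by simp
    moreover have "cmod \<zeta> \<ge> 1"
    proof -
      have "(cmod \<xi>0)^2 = (cmod \<xi>)^2 + 2 * \<epsilon> * \<kappa> + \<epsilon>^2 * (cmod w)^2"
        unfolding \<xi>0_def cmod_add_sq \<kappa>_def by (simp add: norm_mult power_mult_distrib algebra_simps)
      moreover have "(cmod \<xi>)^2 \<ge> 1" using n1 by (simp add: one_le_power)
      moreover have "(1 + \<rho>)^2 \<le> 1 + 2 * \<epsilon> * \<kappa>"
      proof -
        have "(1 + \<rho>)^2 = 1 + \<epsilon> * \<kappa> + (\<epsilon> * \<kappa>) * (\<epsilon> * \<kappa>) / 4" unfolding \<rho>_def by (simp add: power2_eq_square field_simps)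
        moreover have "(\<epsilon> * \<kappa>) * (\<epsilon> * \<kappa>) \<le> 2 * (\<epsilon> * \<kappa>)" using ek e0 kpos by (intro mult_right_mono) auto
        moreover have "0 \<le> \<epsilon> * \<kappa>" using e0 kpos by simp
        ultimately show ?thesis by linarith
      qed
      ultimately have "(1 + \<rho>)^2 \<le> (cmod \<xi>0)^2" by (smt (verit) zero_le_power2 mult_nonneg_nonneg)
      then have "1 + \<rho> \<le> cmod \<xi>0" by (rule power2_le_imp_le) simp
      moreover have "cmod \<xi>0 \<le> cmod \<zeta> + cmod (\<xi>0 - \<zeta>)" using norm_triangle_ineq[of \<zeta> "\<xi>0 - \<zeta>"] by simp
      moreover have "cmod (\<xi>0 - \<zeta>) \<le> \<rho>" using z by (simp add: dist_norm)
      ultimately show ?thesis by linarith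
    qed
    ultimately show "\<exists>\<zeta>. cmod \<zeta> \<ge> 1 \<and> P m (y - \<epsilon>) \<mu> \<zeta> = 0" by blast
  qed
qed


lemma closed_step:
  assumes m1: "m \<ge> 1" and sy: "s < y2" and y2: "y2 < 0"
    and allbad: "\<forall>y\<in>{s<..y2}. \<exists>\<zeta>. 1 \<le> cmod \<zeta> \<and> P m y \<mu> \<zeta> = 0"
  shows "\<exists>\<zeta>. 1 \<le> cmod \<zeta> \<and> P m s \<mu> \<zeta> = 0"
proof -
  define R where "R = 1 + \<bar>s\<bar> * cmod \<mu>"
  define K where "K = (({s..y2} \<times> cball 0 R) \<inter> {p. 1 \<le> cmod (snd p)}) \<inter> {p. P m (fst p) \<mu> (snd p) = 0}"
  have contP: "continuous_on UNIV (\<lambda>p::real \<times> complex. P m (fst p) \<mu> (snd p))"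
    unfolding P_def by (intro continuous_intros)
  have "compact K" unfolding K_def
  proof (intro compact_Int_closed compact_Times compact_Icc compact_cball)
    show "closed {p::real \<times> complex. 1 \<le> cmod (snd p)}"
      by (intro closed_Collect_le continuous_intros)
    show "closed {p::real \<times> complex. P m (fst p) \<mu> (snd p) = 0}"
      using contP by (intro closed_Collect_eq continuous_intros) auto
  qed
  then have "closed (fst ` K)" by (intro compact_imp_closed compact_continuous_image continuous_on_fst continuous_on_id)
  have sub: "{s<..y2} \<subseteq> fst ` K"
  proof
    fix y assume y: "y \<in> {s<..y2}"
    then obtain \<zeta> where z: "1 \<le> cmod \<zeta>" "P m y \<mu> \<zeta> = 0" using allbad by blast
    have "y < 0" using y y2 by simp
    have "cmod \<zeta> \<le> 1 + \<bar>y\<bar> * cmod \<mu>" using root_bound[OF m1 \<open>y < 0\<close> z] .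
    also have "\<dots> \<le> R" unfolding R_def using y y2 by (intro add_left_mono mult_right_mono) auto
    finally have "(y, \<zeta>) \<in> K" unfolding K_def using y z by auto
    then show "y \<in> fst ` K" by force
  qed
  have "s \<in> closure {s<..y2}" using sy by simp
  then have "s \<in> fst ` K" using closure_minimal[OF sub \<open>closed (fst ` K)\<close>] by blast
  then show ?thesis unfolding K_def by force
qed


lemma bad_mono:
  assumes m1: "m \<ge> 1" and y12: "y1 < y2" and y2: "y2 < 0"
    and b2: "\<exists>\<zeta>. 1 \<le> cmod \<zeta> \<and> P m y2 \<mu> \<zeta> = 0"
  shows "\<exists>\<zeta>. 1 \<le> cmod \<zeta> \<and> P m y1 \<mu> \<zeta> = 0"
proof (rule ccontr)
  assume nb: "\<not> (\<exists>\<zeta>. 1 \<le> cmod \<zeta> \<and> P m y1 \<mu> \<zeta> = 0)"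
  define T where "T = {y \<in> {y1..y2}. \<not> (\<exists>\<zeta>. 1 \<le> cmod \<zeta> \<and> P m y \<mu> \<zeta> = 0)}"
  have y1T: "y1 \<in> T" unfolding T_def using nb y12 by simp
  have bdd: "bdd_above T" unfolding T_def by (rule bdd_aboveI[of _ y2]) auto
  define sT where "sT = Sup T"
  have le1: "y1 \<le> sT" unfolding sT_def using cSup_upper[OF y1T bdd] .
  have le2: "sT \<le> y2" unfolding sT_def using y1T by (intro cSup_least) (auto simp: T_def)
  have bs: "\<exists>\<zeta>. 1 \<le> cmod \<zeta> \<and> P m sT \<mu> \<zeta> = 0"
  proof (cases "sT = y2")
    case True then show ?thesis using b2 by simp
  next
    case False
    then have "sT < y2" using le2 by simp
    moreover have "\<forall>y\<in>{sT<..y2}. \<exists>\<zeta>. 1 \<le> cmod \<zeta> \<and> P m y \<mu> \<zeta> = 0"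
    proof
      fix y assume y: "y \<in> {sT<..y2}"
      have "y \<notin> T" using y cSup_upper[OF _ bdd, of y] unfolding sT_def by auto
      then show "\<exists>\<zeta>. 1 \<le> cmod \<zeta> \<and> P m y \<mu> \<zeta> = 0" using y le1 unfolding T_def by auto
    qed
    ultimately show ?thesis using closed_step[OF m1 _ y2] by blast
  qed
  then obtain \<zeta> where z: "1 \<le> cmod \<zeta>" "P m sT \<mu> \<zeta> = 0" by blast
  have sT0: "sT < 0" using le2 y2 by simp
  show False
  proof (cases "\<zeta> = 1")
    case True
    then have "of_real sT * (\<mu> - 1) = 0" using z(2) unfolding P_def by (simp add: algebra_simps)
    then have "\<mu> = 1" using sT0 by simp
    then have "P m y1 \<mu> 1 = 0" unfolding P_def by simp
    then show False using nb by force
  next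
    case False
    obtain \<delta> where d: "\<delta> > 0" and hd: "\<forall>\<epsilon>. 0 < \<epsilon> \<longrightarrow> \<epsilon> < \<delta> \<longrightarrow> (\<exists>\<zeta>. cmod \<zeta> \<ge> 1 \<and> P m (sT - \<epsilon>) \<mu> \<zeta> = 0)"
      using local_step[OF m1 sT0 z False] by blast
    have "\<forall>y\<in>T. y \<le> sT - \<delta>"
    proof
      fix y assume yT: "y \<in> T"
      have "y \<le> sT" unfolding sT_def using cSup_upper[OF yT bdd] .
      show "y \<le> sT - \<delta>"
      proof (rule ccontr)
        assume "\<not> y \<le> sT - \<delta>"
        show False
        proof (cases "y = sT")
          case True then show False using yT bs unfolding T_def by auto
        next
          case False
          then have "0 < sT - y" "sT - y < \<delta>" using \<open>y \<le> sT\<close> \<open>\<not> y \<le> sT - \<delta>\<close> by auto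
          then obtain \<zeta>' where "cmod \<zeta>' \<ge> 1" "P m (sT - (sT - y)) \<mu> \<zeta>' = 0" using hd by blast
          then show False using yT unfolding T_def by auto
        qed
      qed
    qed
    then have "sT \<le> sT - \<delta>" unfolding sT_def using y1T by (intro cSup_least) auto
    then show False using d by simp
  qed
qed

theorem mainTheorem9:
  fixes m :: nat and y1 y2 :: real
  assumes "m \<ge> 1" and "y1 < y2" and "y2 < 0"
  shows "D m y1 \<subseteq> D m y2"
proof
  fix \<mu> assume mu: "\<mu> \<in> D m y1"
  show "\<mu> \<in> D m y2" unfolding D_def
  proof (intro CollectI allI impI)
    fix \<xi> :: complex
    assume eq: "\<xi> ^ (m + 1) - \<xi> ^ m = complex_of_real y2 * \<xi> ^ (m + 1) - complex_of_real y2 * \<mu> * \<xi>"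
    show "cmod \<xi> < 1"
    proof (rule ccontr)
      assume "\<not> cmod \<xi> < 1"
      then have n1: "1 \<le> cmod \<xi>" by simp
      then have "\<xi> \<noteq> 0" by auto
      then have "P m y2 \<mu> \<xi> = 0" using eq_iff_P[OF assms(1)] eq by blast
      then obtain \<zeta> where z: "1 \<le> cmod \<zeta>" "P m y1 \<mu> \<zeta> = 0"
        using bad_mono[OF assms] n1 by blast
      then have "\<zeta> \<noteq> 0" by auto
      then have "\<zeta> ^ (m + 1) - \<zeta> ^ m = complex_of_real y1 * \<zeta> ^ (m + 1) - complex_of_real y1 * \<mu> * \<zeta>"
        using eq_iff_P[OF assms(1)] z(2) by blast
      then have "cmod \<zeta> < 1" using mu unfolding D_def by blast
      then show False using z(1) by simp
    qed
  qed
qed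

end
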